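(* Let $\epsilon>0$, $\alpha\in(0,1)$, $0<\theta_0<\theta_1<1$ and $n\geq 1$ be given. Observe $X\sim \mathrm{Binom}(n,\theta)$, where $\theta$ is unknown. Let $N_0\sim \mathrm{Tulap}(0,b=e^{-\epsilon},0)$, and define the decision rule $\phi^*:\mathbb{Z}\to[0,1]$ by $\phi^*_x=F_{N_0}(x-m)$, where $m\in\mathbb{R}$ is chosen such that $\mathbb{E}_{\theta_0}\phi^*_X=\alpha$. Then $\phi^*$ is the uniformly most powerful level-$\alpha$ test of $H_0:\theta=\theta_0$ versus $H_1:\theta=\theta_1$ among $\mathscr D^n_{\epsilon,0}$.
   Context: Nearest integer function: for $t\in\mathbb{R}$, $[t]$ is the integer nearest to $t$, where for $z\in\mathbb{Z}$, $[z+1/2]$ is defined to be the nearest even integer. Tulap distribution: for $m\in\mathbb{R}$, $b\in(0,1)$, $q\in[0,1)$, $N_0\sim\mathrm{Tulap}(m,b,0)$ has cdf $F_{N_0}(x)=\frac{b^{-[x-m]}}{1+b}\big(b+(x-m-[x-m]+\tfrac12)(1-b)\big)$ for $x\leq [m]$ and $F_{N_0}(x)=1-\frac{b^{[x-m]}}{1+b}\big(b+([x-m]-(x-m)+\tfrac12)(1-b)\big)$ for $x>[m]$; and $N\sim \mathrm{Tulap}(m,b,q)$ has cdf $F_N(x)=\frac{F_{N_0}(x)-q/2}{1-q}\,I\{q/2\leq F_{N_0}(x)\leq 1-q/2\}+I\{F_{N_0}(x)>1-q/2\}$. A (randomized) test is a function $\phi:\{0,1,\dots,n\}\to[0,1]$,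 $\phi_x$ being the probability of rejecting $H_0$ when $X=x$; its power at $\theta$ is $\mathbb{E}_\theta\phi_X$. For $\epsilon>0,\delta\ge 0$, $\mathscr D^n_{\epsilon,\delta}$ is the set of tests $\phi$ such that for all $x\in\{0,\dots,n-1\}$: $\phi_x\le e^\epsilon\phi_{x+1}+\delta$, $\phi_{x+1}\le e^\epsilon\phi_x+\delta$, $1-\phi_x\le e^\epsilon(1-\phi_{x+1})+\delta$, $1-\phi_{x+1}\le e^\epsilon(1-\phi_x)+\delta$ (these are the tests satisfying $(\epsilon,\delta)$-differential privacy as functions of the count). A test $\phi^*\in\Phi$ is uniformly most powerful (UMP) at level $\alpha$ among $\Phi$ if $\sup_{\theta\in\Theta_0}\mathbb{E}_\theta\phi^*\le\alpha$ and for every $\phi\in\Phi$ with $\sup_{\theta\in\Theta_0}\mathbb{E}_\theta\phi\le\alpha$, $\mathbb{E}_\theta\phi^*\ge\mathbb{E}_\theta\phi$ for all $\theta$ in the alternative. *)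

theory Defs
  imports Complex_Main
begin

definition nearest_int :: "real \<Rightarrow> int" where
  "nearest_int t =
     (if t - of_int \<lfloor>t\<rfloor> < 1/2 then \<lfloor>t\<rfloor>
      else if t - of_int \<lfloor>t\<rfloor> > 1/2 then \<lfloor>t\<rfloor> + 1
      else if even \<lfloor>t\<rfloor> then \<lfloor>t\<rfloor> else \<lfloor>t\<rfloor> + 1)"

definition tulap0_cdf :: "real \<Rightarrow> real \<Rightarrow> real \<Rightarrow> real" where
  "tulap0_cdf m b x =
     (if x \<le> of_int (nearest_int m) then
        b powi (- nearest_int (x - m)) / (1 + b) *
          (b + (x - m - of_int (nearest_int (x - m)) + 1/2) * (1 - b))
      else
        1 - b powi (nearest_int (x - m)) / (1 + b) *
          (b + (of_int (nearest_int (x - m)) - (x - m) + 1/2) * (1 - b)))"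

definition tulap_cdf :: "real \<Rightarrow> real \<Rightarrow> real \<Rightarrow> real \<Rightarrow> real" where
  "tulap_cdf m b q x =
     (let F0 = tulap0_cdf m b x in
       (if q/2 \<le> F0 \<and> F0 \<le> 1 - q/2 then (F0 - q/2) / (1 - q) else 0)
       + (if F0 > 1 - q/2 then 1 else 0))"

definition binom_power :: "nat \<Rightarrow> real \<Rightarrow> (nat \<Rightarrow> real) \<Rightarrow> real" where
  "binom_power n \<theta> \<phi> =
     (\<Sum>x = 0..n. real (n choose x) * \<theta> ^ x * (1 - \<theta>) ^ (n - x) * \<phi> x)"

text \<open>Tests on {0..n} (values outside {0..n} are irrelevant).\<close>
definition is_test :: "nat \<Rightarrow> (nat \<Rightarrow> real) \<Rightarrow> bool" where
  "is_test n \<phi> \<longleftrightarrow> (\<forall>x\<le>n. 0 \<le> \<phi> x \<and> \<phi> x \<le> 1)"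

definition DP_tests :: "nat \<Rightarrow> real \<Rightarrow> real \<Rightarrow> (nat \<Rightarrow> real) set" where
  "DP_tests n \<epsilon> \<delta> = {\<phi>. is_test n \<phi> \<and>
     (\<forall>x<n. \<phi> x \<le> exp \<epsilon> * \<phi> (x + 1) + \<delta>
          \<and> \<phi> (x + 1) \<le> exp \<epsilon> * \<phi> x + \<delta>
          \<and> 1 - \<phi> x \<le> exp \<epsilon> * (1 - \<phi> (x + 1)) + \<delta>
          \<and> 1 - \<phi> (x + 1) \<le> exp \<epsilon> * (1 - \<phi> x) + \<delta>)}"

definition is_UMP :: "nat \<Rightarrow> (nat \<Rightarrow> real) set \<Rightarrow> real set \<Rightarrow> real set \<Rightarrow> real
                      \<Rightarrow> (nat \<Rightarrow> real) \<Rightarrow> bool" where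
  "is_UMP n \<Phi> \<Theta>0 \<Theta>1 \<alpha> \<phi> \<longleftrightarrow>
     \<phi> \<in> \<Phi> \<and> (\<forall>\<theta>\<in>\<Theta>0. binom_power n \<theta> \<phi> \<le> \<alpha>) \<and>
     (\<forall>\<psi>\<in>\<Phi>. (\<forall>\<theta>\<in>\<Theta>0. binom_power n \<theta> \<psi> \<le> \<alpha>) \<longrightarrow>
        (\<forall>\<theta>\<in>\<Theta>1. binom_power n \<theta> \<phi> \<ge> binom_power n \<theta> \<psi>))"

end

theory Submission
  imports Defs
begin

definition LL :: "real \<Rightarrow> int \<Rightarrow> real \<Rightarrow> real" where
  "LL b k u = b ^ nat (-k) / (1+b) * (b + (u + 1/2)*(1-b))"
definition UU :: "real \<Rightarrow> int \<Rightarrow> real \<Rightarrow> real" where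
  "UU b k u = 1 - b ^ nat k / (1+b) * (b + (1/2 - u)*(1-b))"
definition HH :: "real \<Rightarrow> int \<Rightarrow> real \<Rightarrow> real" where
  "HH b k u = (if k \<le> 0 then LL b k u else UU b k u)"

lemma nearest_int_bound: "\<bar>t - of_int (nearest_int t)\<bar> \<le> 1/2"
  unfolding nearest_int_def
  using floor_correct[of t] by (auto split: if_splits)

lemma nearest_int_0: "nearest_int 0 = 0"
  unfolding nearest_int_def by simp

lemma LU0: "0 < b \<Longrightarrow> LL b 0 u = UU b 0 u"
  unfolding LL_def UU_def by (simp add: field_simps)

lemma HH_tie: assumes "0 < b" shows "HH b k (1/2) = HH b (k+1) (-1/2)"
proof -
  consider "k \<le> -1" | "k = 0" | "k \<ge> 1" by linarith
  then show ?thesis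
  proof cases
    case 1
    then have e: "nat (-k) = Suc (nat (-(k+1)))" by linarith
    show ?thesis using 1 assms unfolding HH_def LL_def by (simp add: e field_simps)
  next
    case 2
    then show ?thesis using assms unfolding HH_def LL_def UU_def by (simp add: field_simps)
  next
    case 3
    then have "nat (k+1) = Suc (nat k)" by linarith
    then have e: "b ^ nat (k+1) = b * b ^ nat k" by simp
    show ?thesis using 3 assms unfolding HH_def UU_def e by (simp add: field_simps)
  qed
qed

lemma tulap0_HH_near: assumes "0 < b"
  shows "tulap0_cdf 0 b t = HH b (nearest_int t) (t - nearest_int t)"
proof -
  define j where "j = nearest_int t"
  have jb: "\<bar>t - j\<bar> \<le> 1/2" using nearest_int_bound j_def by simp
  show ?thesis
  proof (cases "t \<le> 0")
    case True
    then have "j \<le> 0" using jb by linarith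
    then have p: "b powi (- j) = b ^ nat (-j)" by (simp add: power_int_nonneg_exp)
    show ?thesis using True \<open>j \<le> 0\<close> unfolding tulap0_cdf_def HH_def LL_def
      by (simp add: nearest_int_0 p flip: j_def)
  next
    case False
    then have "j \<ge> 0" using jb by linarith
    then have p: "b powi j = b ^ nat j" by (simp add: power_int_nonneg_exp)
    show ?thesis
    proof (cases "j = 0")
      case True
      then show ?thesis using False assms unfolding tulap0_cdf_def HH_def
        by (simp add: nearest_int_0 p LU0 UU_def flip: j_def)
    next
      case False
      then show ?thesis using \<open>\<not> t \<le> 0\<close> \<open>j \<ge> 0\<close> unfolding tulap0_cdf_def HH_def UU_def
        by (simp add: nearest_int_0 p flip: j_def)
    qed
  qed
qed

lemma tulap0_HH: assumes "0 < b" "\<bar>t - of_int k\<bar> \<le> 1/2"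
  shows "tulap0_cdf 0 b t = HH b k (t - k)"
proof -
  define j where "j = nearest_int t"
  have jb: "\<bar>t - j\<bar> \<le> 1/2" using nearest_int_bound j_def by simp
  have "j = k \<or> j = k + 1 \<or> j = k - 1"
  proof -
    have "real_of_int j - k < 2" "real_of_int k - j < 2" using jb assms(2) by linarith+
    then have "j - k < 2" "k - j < 2" by linarith+
    then show ?thesis by linarith
  qed
  moreover have "HH b j (t - j) = HH b k (t - k)"
    using calculation
  proof (elim disjE)
    assume "j = k + 1"
    then have a: "t - k = 1/2" "t - j = -1/2" using jb assms(2) by auto
    then show ?thesis using HH_tie[OF assms(1), of k] \<open>j = k+1\<close> by metis
  next
    assume "j = k - 1"
    then have a: "t - k = -1/2" "t - j = 1/2" using jb assms(2) by auto
    then show ?thesis using HH_tie[OF assms(1), of j] \<open>j = k-1\<close> by (metis diff_add_cancel)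
  qed simp
  ultimately show ?thesis using tulap0_HH_near[OF assms(1), of t] j_def by simp
qed


lemma HH_bounds: assumes "0 < b" "b < 1" "\<bar>u\<bar> \<le> 1/2"
  shows "0 \<le> HH b k u \<and> HH b k u \<le> 1"
proof -
  define c where "c = b + (u + 1/2)*(1-b)"
  define c' where "c' = b + (1/2 - u)*(1-b)"
  have c: "0 \<le> c" "c \<le> 1" "0 \<le> c'" "c' \<le> 1" unfolding c_def c'_def using assms
  proof -
    have m1: "(u + 1/2)*(1-b) \<le> 1-b" using mult_right_mono[of "u+1/2" 1 "1-b"] assms by simp
    have m2: "(1/2 - u)*(1-b) \<le> 1-b" using mult_right_mono[of "1/2 - u" 1 "1-b"] assms by simp
    have m3: "0 \<le> (u + 1/2)*(1-b)" "0 \<le> (1/2 - u)*(1-b)" using assms by (auto intro!: mult_nonneg_nonneg)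
    have "b + (u + 1/2)*(1-b) \<le> b + (1-b)" using m1 by (rule add_left_mono)
    then show "b + (u + 1/2)*(1-b) \<le> 1" by simp
    have "b + (1/2 - u)*(1-b) \<le> b + (1-b)" using m2 by (rule add_left_mono)
    then show "b + (1/2 - u)*(1-b) \<le> 1" by simp
    show "0 \<le> b + (u + 1/2)*(1-b)" using m3 assms by simp
    show "0 \<le> b + (1/2 - u)*(1-b)" using m3 assms by simp
  qed
  show ?thesis
  proof (cases "k \<le> 0")
    case True
    have P: "0 \<le> b ^ nat (-k)" "b ^ nat (-k) \<le> 1" using assms by (auto simp: power_le_one)
    have "b ^ nat (-k) * c \<le> 1" using P c mult_le_one by blast
    then have "b ^ nat (-k) * c / (1+b) \<le> 1" using assms by (simp add: divide_le_eq)
    then show ?thesis using True P c assms unfolding HH_def LL_def c_def[symmetric] by simp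
  next
    case False
    have P: "0 \<le> b ^ nat k" "b ^ nat k \<le> 1" using assms by (auto simp: power_le_one)
    have "b ^ nat k * c' \<le> 1" using P c mult_le_one by blast
    then have "b ^ nat k * c' / (1+b) \<le> 1" using assms by (simp add: divide_le_eq)
    then show ?thesis using False P c assms unfolding HH_def UU_def c'_def[symmetric] by simp
  qed
qed

lemma ineq1: fixes b X :: real assumes "0<b" "b<1" "0\<le>X" "X\<le>1"
  shows "X/(1+b) \<le> 1 - b*(1 - b*X/(1+b))"
proof -
  have e: "1 - b*(1 - b*X/(1+b)) = ((1-b)*(1+b) + b*b*X)/(1+b)" using assms by (simp add: field_simps)
  have "X*(1-b*b) \<le> 1*(1-b*b)" using assms by (intro mult_right_mono) (auto simp: mult_le_one)
  then have "X \<le> (1-b)*(1+b) + b*b*X" by (simp add: algebra_simps)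
  then show ?thesis unfolding e using assms by (intro divide_right_mono) auto
qed
lemma ineq2: fixes b X :: real assumes "0<b" "b<1" "0\<le>X" "X\<le>1"
  shows "1 - b*X/(1+b) \<le> (1 - X/(1+b))/b"
proof -
  have e1: "1 - b*X/(1+b) = (b*(1+b) - b*b*X)/(b*(1+b))" using assms by (simp add: divide_simps) (simp add: algebra_simps)
  have e2: "(1 - X/(1+b))/b = ((1+b) - X)/(b*(1+b))" using assms by (simp add: field_simps)
  have "X*(1-b*b) \<le> 1*(1-b*b)" using assms by (intro mult_right_mono) (auto simp: mult_le_one)
  then have "b*(1+b) - b*b*X \<le> (1+b) - X" using assms by (simp add: algebra_simps)
  then show ?thesis unfolding e1 e2 using assms by (intro divide_right_mono) auto
qed

lemma HH_step: assumes "0 < b" "b < 1" "\<bar>u\<bar> \<le> 1/2"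
  shows "HH b (k+1) u = min (HH b k u / b) (1 - b * (1 - HH b k u))"
proof -
  define c where "c = b + (u + 1/2)*(1-b)"
  define c' where "c' = b + (1/2 - u)*(1-b)"
  have c: "0 \<le> c" "c \<le> 1" "0 \<le> c'" "c' \<le> 1" unfolding c_def c'_def
  proof -
    have m1: "(u + 1/2)*(1-b) \<le> 1-b" using mult_right_mono[of "u+1/2" 1 "1-b"] assms by simp
    have m2: "(1/2 - u)*(1-b) \<le> 1-b" using mult_right_mono[of "1/2 - u" 1 "1-b"] assms by simp
    have m3: "0 \<le> (u + 1/2)*(1-b)" "0 \<le> (1/2 - u)*(1-b)" using assms by (auto intro!: mult_nonneg_nonneg)
    have "b + (u + 1/2)*(1-b) \<le> b + (1-b)" using m1 by (rule add_left_mono)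
    then show "b + (u + 1/2)*(1-b) \<le> 1" by simp
    have "b + (1/2 - u)*(1-b) \<le> b + (1-b)" using m2 by (rule add_left_mono)
    then show "b + (1/2 - u)*(1-b) \<le> 1" by simp
    show "0 \<le> b + (u + 1/2)*(1-b)" using m3 assms by simp
    show "0 \<le> b + (1/2 - u)*(1-b)" using m3 assms by simp
  qed
  show ?thesis
  proof (cases "k \<le> -1")
    case True
    define P where "P = b ^ nat (-(k+1))"
    have "nat (-k) = Suc (nat (-(k+1)))" using True by linarith
    then have e: "b ^ nat (-k) = b * P" unfolding P_def by simp
    have P: "0 \<le> P" "P \<le> 1" using assms unfolding P_def by (auto simp: power_le_one)
    define X where "X = P * c"
    have X: "X \<le> 1" "0 \<le> X" unfolding X_def using P c mult_le_one by auto
    have h1: "HH b (k+1) u = X / (1+b)" using True unfolding HH_def LL_def P_def c_def X_def by simp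
    have h2: "HH b k u = b * X / (1+b)" using True unfolding HH_def LL_def e c_def X_def by (simp add: mult.assoc)
    have h3: "HH b k u / b = X / (1+b)" unfolding h2 using assms by simp
    show ?thesis unfolding h3 unfolding h1 h2 using ineq1[OF assms(1,2) X(2,1)] by (simp add: min_def)
  next
    case False
    define P where "P = b ^ nat k"
    have "nat (k+1) = Suc (nat k)" using False by linarith
    then have e: "b ^ nat (k+1) = b * P" unfolding P_def by simp
    have P: "0 \<le> P" "P \<le> 1" using assms unfolding P_def by (auto simp: power_le_one)
    define X where "X = P * c'"
    have X: "X \<le> 1" "0 \<le> X" unfolding X_def using P c mult_le_one by auto
    have h1: "HH b (k+1) u = 1 - b * X / (1+b)" using False unfolding HH_def UU_def e c'_def X_def by (simp add: mult.assoc)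
    have h2: "HH b k u = 1 - X / (1+b)"
    proof (cases "k = 0")
      case True then show ?thesis using assms LU0[OF assms(1), of u] unfolding HH_def P_def c'_def X_def UU_def by simp
    next
      case False then show ?thesis using \<open>\<not> k \<le> -1\<close> unfolding HH_def UU_def P_def c'_def X_def by simp
    qed
    show ?thesis unfolding h1 h2 using ineq2[OF assms(1,2) X(2,1)] by (simp add: min_def)
  qed
qed

lemma tulap0_step: assumes "0 < b" "b < 1"
  shows "tulap0_cdf 0 b (t+1) = min (tulap0_cdf 0 b t / b) (1 - b * (1 - tulap0_cdf 0 b t))"
    and "0 \<le> tulap0_cdf 0 b t" "tulap0_cdf 0 b t \<le> 1"
proof -
  define k where "k = nearest_int t"
  have kb: "\<bar>t - k\<bar> \<le> 1/2" using nearest_int_bound k_def by simp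
  have kb1: "\<bar>(t+1) - of_int (k+1)\<bar> \<le> 1/2" using kb by simp
  have a: "tulap0_cdf 0 b t = HH b k (t - k)" using tulap0_HH[OF assms(1) kb] .
  have b: "tulap0_cdf 0 b (t+1) = HH b (k+1) (t - k)" using tulap0_HH[OF assms(1) kb1] by simp
  show "tulap0_cdf 0 b (t+1) = min (tulap0_cdf 0 b t / b) (1 - b * (1 - tulap0_cdf 0 b t))"
    unfolding a b using HH_step[OF assms kb] .
  show "0 \<le> tulap0_cdf 0 b t" "tulap0_cdf 0 b t \<le> 1" unfolding a using HH_bounds[OF assms kb] by auto
qed

lemma tulap_q0: assumes "0 < b" "b < 1"
  shows "tulap_cdf 0 b 0 t = tulap0_cdf 0 b t"
  using tulap0_step(2,3)[OF assms, of t] unfolding tulap_cdf_def Let_def by simp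


lemma g_props: fixes b p q :: real
  assumes "0 < b" "b < 1" "0 \<le> p" "p \<le> 1" "q = min (p / b) (1 - b * (1 - p))"
  shows "p \<le> q" "q \<le> p / b" "b * (1 - p) \<le> 1 - q"
proof -
  have "p * b \<le> p" using assms by (simp add: mult_left_le)
  then have "p \<le> p / b" using assms by (simp add: le_divide_eq)
  moreover have "p \<le> 1 - b * (1 - p)"
  proof -
    have "b * (1 - p) \<le> 1 * (1 - p)" using assms by (intro mult_right_mono) auto
    then show ?thesis by simp
  qed
  ultimately show "p \<le> q" using assms(5) by simp
  show "q \<le> p / b" using assms(5) by simp
  show "b * (1 - p) \<le> 1 - q" using assms(5) by simp
qed

lemma prop_step: fixes b p q s t :: real
  assumes "0 < b" "b < 1" "q = min (p / b) (1 - b * (1 - p))"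
    and "t \<le> s / b" "1 - s \<le> (1 - t) / b" "s \<le> p"
  shows "t \<le> q"
proof -
  have "t \<le> p / b" using assms(1,4,6) by (smt (verit) divide_right_mono)
  moreover have "t \<le> 1 - b * (1 - p)"
  proof -
    have "b * (1 - s) \<le> 1 - t" using assms(1,5) by (simp add: le_divide_eq mult.commute)
    moreover have "b * (1 - p) \<le> b * (1 - s)" using assms by (intro mult_left_mono) auto
    ultimately show ?thesis by linarith
  qed
  ultimately show ?thesis using assms(3) by simp
qed


theorem theorem3:
  fixes \<epsilon> \<alpha> \<theta>0 \<theta>1 m :: real and n :: nat
  assumes "\<epsilon> > 0" and "0 < \<alpha>" and "\<alpha> < 1"
    and "0 < \<theta>0" and "\<theta>0 < \<theta>1" and "\<theta>1 < 1" and "n \<ge> 1"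
    and "binom_power n \<theta>0 (\<lambda>x. tulap_cdf 0 (exp (- \<epsilon>)) 0 (real x - m)) = \<alpha>"
  shows "is_UMP n (DP_tests n \<epsilon> 0) {\<theta>0} {\<theta>1} \<alpha>
           (\<lambda>x. tulap_cdf 0 (exp (- \<epsilon>)) 0 (real x - m))"
proof -
  define b where "b = exp (- \<epsilon>)"
  have b: "0 < b" "b < 1" unfolding b_def using assms(1) by auto
  have eb: "exp \<epsilon> = 1 / b" unfolding b_def by (simp add: exp_minus field_simps)
  define \<phi> where "\<phi> = (\<lambda>x::nat. tulap_cdf 0 (exp (- \<epsilon>)) 0 (real x - m))"
  have \<phi>F: "\<phi> x = tulap0_cdf 0 b (real x - m)" for x
    unfolding \<phi>_def b_def[symmetric] using tulap_q0[OF b] by simp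
  have \<phi>01: "0 \<le> \<phi> x" "\<phi> x \<le> 1" for x unfolding \<phi>F using tulap0_step(2,3)[OF b] by auto
  have \<phi>step: "\<phi> (x+1) = min (\<phi> x / b) (1 - b * (1 - \<phi> x))" for x
  proof -
    have "real (x+1) - m = (real x - m) + 1" by simp
    then show ?thesis unfolding \<phi>F using tulap0_step(1)[OF b, of "real x - m"] by metis
  qed
  note gp = g_props[OF b \<phi>01 \<phi>step]
  have inDP: "\<phi> \<in> DP_tests n \<epsilon> 0"
    unfolding DP_tests_def is_test_def
  proof (intro CollectI conjI allI impI)
    fix x show "0 \<le> \<phi> x" "\<phi> x \<le> 1" by (rule \<phi>01)+
  next
    fix x :: nat
    have e1: "1 \<le> exp \<epsilon>" using assms(1) by simp
    have "\<phi> (x+1) \<le> exp \<epsilon> * \<phi> (x+1)" using e1 \<phi>01[of "x+1"] by (simp add: mult_le_cancel_right1)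
    then show "\<phi> x \<le> exp \<epsilon> * \<phi> (x + 1) + 0" using gp(1)[of x] by simp
    show "\<phi> (x + 1) \<le> exp \<epsilon> * \<phi> x + 0" using gp(2)[of x] unfolding eb by simp
    have "b * (1 - \<phi> x) / b \<le> (1 - \<phi> (x+1)) / b" using gp(3)[of x] b by (intro divide_right_mono) auto
    then show "1 - \<phi> x \<le> exp \<epsilon> * (1 - \<phi> (x + 1)) + 0" unfolding eb using b by simp
    have "1 - \<phi> x \<le> exp \<epsilon> * (1 - \<phi> x)" using e1 \<phi>01[of x] by (simp add: mult_le_cancel_right1)
    then show "1 - \<phi> (x + 1) \<le> exp \<epsilon> * (1 - \<phi> x) + 0" using gp(1)[of x] by simp
  qed
  define f where "f = (\<lambda>\<theta> (x::nat). real (n choose x) * \<theta> ^ x * (1 - \<theta>) ^ (n - x))"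
  have bp: "binom_power n \<theta> g = (\<Sum>x=0..n. f \<theta> x * g x)" for \<theta> g
    unfolding binom_power_def f_def by simp
  define r where "r = (\<lambda>x::nat. (\<theta>1/\<theta>0) ^ x * ((1-\<theta>1)/(1-\<theta>0)) ^ (n - x))"
  have f1: "f \<theta>1 x = r x * f \<theta>0 x" for x
  proof -
    have "\<theta>1 ^ x = (\<theta>1/\<theta>0)^x * \<theta>0^x" using assms(4) by (simp add: power_divide)
    moreover have "(1-\<theta>1) ^ (n-x) = ((1-\<theta>1)/(1-\<theta>0))^(n-x) * (1-\<theta>0)^(n-x)"
      using assms(4,5,6) by (simp add: power_divide)
    ultimately show ?thesis unfolding f_def r_def by (simp add: algebra_simps)
  qed
  have f0nn: "0 \<le> f \<theta>0 x" for x unfolding f_def using assms(4,5,6) by simp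
  have rnn: "0 \<le> r x" for x unfolding r_def using assms(4,5,6) by simp
  have rmono: "r x \<le> r y" if "x \<le> y" "y \<le> n" for x y
  proof -
    have "(\<theta>1/\<theta>0) ^ x \<le> (\<theta>1/\<theta>0) ^ y" using that assms(4,5) by (intro power_increasing) auto
    moreover have "((1-\<theta>1)/(1-\<theta>0)) ^ (n-x) \<le> ((1-\<theta>1)/(1-\<theta>0)) ^ (n-y)"
      using that assms(4,5,6) by (intro power_decreasing) auto
    ultimately show ?thesis unfolding r_def using assms(4,5,6)
      by (intro mult_mono) auto
  qed
  show ?thesis
    unfolding is_UMP_def \<phi>_def[symmetric]
  proof (intro conjI ballI impI)
    show "\<phi> \<in> DP_tests n \<epsilon> 0" by (rule inDP)
    show "binom_power n \<theta> \<phi> \<le> \<alpha>" if "\<theta> \<in> {\<theta>0}" for \<theta> using that assms(8) \<phi>_def by simp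
  next
    fix \<psi> \<theta> assume \<psi>: "\<psi> \<in> DP_tests n \<epsilon> 0" and lev: "\<forall>\<theta>\<in>{\<theta>0}. binom_power n \<theta> \<psi> \<le> \<alpha>"
      and th: "\<theta> \<in> {\<theta>1}"
    have \<psi>DP: "\<psi> (x+1) \<le> \<psi> x / b" "1 - \<psi> x \<le> (1 - \<psi> (x+1)) / b" if "x < n" for x
      using \<psi> that unfolding DP_tests_def eb by auto
    have prop1: "\<psi> (x+1) \<le> \<phi> (x+1)" if "x < n" "\<psi> x \<le> \<phi> x" for x
      using prop_step[OF b \<phi>step \<psi>DP[OF that(1)] that(2)] .
    have propg: "\<psi> y \<le> \<phi> y" if "k \<le> y" "y \<le> n" "\<psi> k \<le> \<phi> k" for k y
      using that
    proof (induction y)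
      case 0 then show ?case by simp
    next
      case (Suc y)
      show ?case
      proof (cases "k = Suc y")
        case True then show ?thesis using Suc by simp
      next
        case False
        then have "\<psi> y \<le> \<phi> y" using Suc by auto
        then show ?thesis using prop1[of y] Suc by simp
      qed
    qed
    define d where "d = (\<lambda>x. \<phi> x - \<psi> x)"
    obtain k where kn: "k \<le> n" and kd: "\<And>x. x \<le> n \<Longrightarrow> 0 \<le> (r x - r k) * d x"
    proof (cases "\<exists>x\<le>n. \<psi> x \<le> \<phi> x")
      case True
      define k where "k = (LEAST x. x \<le> n \<and> \<psi> x \<le> \<phi> x)"
      have k: "k \<le> n" "\<psi> k \<le> \<phi> k" using LeastI_ex[OF True] unfolding k_def by auto
      have "0 \<le> (r x - r k) * d x" if "x \<le> n" for x
      proof (cases "x < k")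
        case True
        then have "\<not> \<psi> x \<le> \<phi> x" using not_less_Least[of x "\<lambda>x. x \<le> n \<and> \<psi> x \<le> \<phi> x"] that k_def by auto
        then have "d x \<le> 0" unfolding d_def by simp
        moreover have "r x - r k \<le> 0" using rmono[of x k] True k by simp
        ultimately show ?thesis by (simp add: mult_nonpos_nonpos)
      next
        case False
        then have "d x \<ge> 0" using propg[of k x] k that unfolding d_def by simp
        moreover have "r x - r k \<ge> 0" using rmono[of k x] False that by simp
        ultimately show ?thesis by simp
      qed
      then show ?thesis using that k by blast
    next
      case False
      have "0 \<le> (r x - r n) * d x" if "x \<le> n" for x
      proof -
        have "d x \<le> 0" using False that unfolding d_def by auto
        moreover have "r x - r n \<le> 0" using rmono[of x n] that by simp
        ultimately show ?thesis by (simp add: mult_nonpos_nonpos)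
      qed
      then show ?thesis using that by blast
    qed
    have "binom_power n \<theta>1 \<phi> - binom_power n \<theta>1 \<psi> = (\<Sum>x=0..n. f \<theta>1 x * d x)"
      unfolding bp d_def by (simp add: sum_subtractf[symmetric] algebra_simps)
    also have "\<dots> = (\<Sum>x=0..n. (r x - r k) * d x * f \<theta>0 x) + r k * (\<Sum>x=0..n. f \<theta>0 x * d x)"
      unfolding f1 by (simp add: sum_distrib_left sum.distrib[symmetric] algebra_simps)
    also have "\<dots> \<ge> 0"
    proof -
      have "(\<Sum>x=0..n. f \<theta>0 x * d x) = binom_power n \<theta>0 \<phi> - binom_power n \<theta>0 \<psi>"
        unfolding bp d_def by (simp add: sum_subtractf[symmetric] algebra_simps)
      also have "\<dots> \<ge> 0" using lev assms(8) \<phi>_def by simp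
      finally have "0 \<le> r k * (\<Sum>x=0..n. f \<theta>0 x * d x)" using rnn[of k] by simp
      moreover have "0 \<le> (\<Sum>x=0..n. (r x - r k) * d x * f \<theta>0 x)"
        using kd f0nn by (intro sum_nonneg) auto
      ultimately show ?thesis by simp
    qed
    finally show "binom_power n \<theta> \<psi> \<le> binom_power n \<theta> \<phi>" using th by simp
  qed
qed

end
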